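(* Let $K$ be a positive semidefinite kernel, let $(\mathbf{x}_i,y_i)$, $i=1,\dots,N$ with $N=n+mL$, be the augmented MU-SVM data set with costs $C_i>0$ and margins $e_{il}$ (defined in the context), and let $\boldsymbol\alpha=(\alpha_{il})$ be an optimal solution of the dual problem $$\max_{\boldsymbol\alpha}\ -\tfrac12\sum_{i,j}\sum_l\alpha_{il}\alpha_{jl}K(\mathbf{x}_i,\mathbf{x}_j)-\sum_{i,l}\alpha_{il}e_{il}\quad\text{s.t.}\quad\sum_l\alpha_{il}=0\ \forall i;\ \ \alpha_{il}\le C_i\text{ if }l=y_i;\ \ \alpha_{il}\le0\text{ if }l\ne y_i.$$ Let $SV_1=\{i: 0<\alpha_{iy_i}<C_i\}$. Then for every $i\in SV_1$: (i) $\sum_{k=1}^L\alpha_{ik}\big[\sum_j\alpha_{jk}K(\mathbf{x}_i,\mathbf{x}_j)+e_{ik}\big]=0$; (ii) for every $k\ne y_i$ with $\alpha_{ik}<0$ (strictly), $\sum_j\alpha_{jk}K(\mathbf{x}_i,\mathbf{x}_j)+e_{ik}=\sum_j\alpha_{jy_i}K(\mathbf{x}_i,\mathbf{x}_j)+e_{iy_i}$; (iii) for every $\boldsymbol\gamma_i=(\gamma_{i1},\dots,\gamma_{iL})$ with $\sum_k\gamma_{ik}=0$ and $\gamma_{ik}=0$ whenever $\alpha_{ik}=0$, one has $\sum_k\gamma_{ik}\big[\sum_j\alpha_{jk}K(\mathbf{x}_i,\mathbf{x}_j)+e_{ik}\big]=0$.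
   Context: Training samples $(\mathbf{x}_i,y_i)$, $i=1,\dots,n$, $y_i\in\{1,\dots,L\}$, have $C_i=C$ and $e_{il}=1-\delta_{il}$. Each universum sample $\mathbf{x}^*_{i'}$, $i'=1,\dots,m$, is replicated $L$ times: for $k=1,\dots,L$ the index $i=n+(i'-1)L+k$ carries $(\mathbf{x}_i,y_i)=(\mathbf{x}^*_{i'},k)$, $C_i=C^*$ and $e_{il}=-\Delta(1-\delta_{il})$, with $\Delta\ge0$. Here $\delta_{il}=1$ if $y_i=l$, else $0$. This dual is the dual of the primal $\min\frac12\sum_l\|\mathbf{w}_l\|^2+\sum_iC_i\xi_i$ s.t. $(\mathbf{w}_{y_i}-\mathbf{w}_l)^\top\phi(\mathbf{x}_i)\ge e_{il}-\xi_i$, with $\mathbf{w}_l=\sum_i\alpha_{il}\phi(\mathbf{x}_i)$, where $\phi$ is the feature map of $K$. *)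

theory Defs
  imports Complex_Main
begin

definition psd_kernel :: "('a \<Rightarrow> 'a \<Rightarrow> real) \<Rightarrow> bool" where
  "psd_kernel K \<longleftrightarrow> (\<forall>x y. K x y = K y x) \<and>
     (\<forall>(p::nat) (c::nat \<Rightarrow> real) (z::nat \<Rightarrow> 'a).
        0 \<le> (\<Sum>i<p. \<Sum>j<p. c i * c j * K (z i) (z j)))"

text \<open>Augmented MU-SVM data set (indices i = 1..n+m*L, classes 1..L).
  For i > n, i = n + (i'-1)*L + k with 1 \<le> k \<le> L.\<close>
definition aug_x :: "nat \<Rightarrow> nat \<Rightarrow> (nat \<Rightarrow> 'a) \<Rightarrow> (nat \<Rightarrow> 'a) \<Rightarrow> nat \<Rightarrow> 'a" where
  "aug_x n L xs xu i = (if i \<le> n then xs i else xu ((i - n - 1) div L + 1))"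

definition aug_y :: "nat \<Rightarrow> nat \<Rightarrow> (nat \<Rightarrow> nat) \<Rightarrow> nat \<Rightarrow> nat" where
  "aug_y n L ys i = (if i \<le> n then ys i else (i - n - 1) mod L + 1)"

definition aug_C :: "nat \<Rightarrow> real \<Rightarrow> real \<Rightarrow> nat \<Rightarrow> real" where
  "aug_C n C Cs i = (if i \<le> n then C else Cs)"

definition kdelta :: "nat \<Rightarrow> nat \<Rightarrow> real" where
  "kdelta a b = (if a = b then 1 else 0)"

definition aug_e :: "nat \<Rightarrow> nat \<Rightarrow> real \<Rightarrow> (nat \<Rightarrow> nat) \<Rightarrow> nat \<Rightarrow> nat \<Rightarrow> real" where
  "aug_e n L \<Delta> ys i l =
     (if i \<le> n then 1 - kdelta (aug_y n L ys i) l
      else - \<Delta> * (1 - kdelta (aug_y n L ys i) l))"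

definition dual_obj :: "('a \<Rightarrow> 'a \<Rightarrow> real) \<Rightarrow> (nat \<Rightarrow> 'a) \<Rightarrow> (nat \<Rightarrow> nat \<Rightarrow> real)
     \<Rightarrow> nat \<Rightarrow> nat \<Rightarrow> (nat \<Rightarrow> nat \<Rightarrow> real) \<Rightarrow> real" where
  "dual_obj K X E N L \<alpha> =
     - (1/2) * (\<Sum>i\<in>{1..N}. \<Sum>j\<in>{1..N}. \<Sum>l\<in>{1..L}. \<alpha> i l * \<alpha> j l * K (X i) (X j))
     - (\<Sum>i\<in>{1..N}. \<Sum>l\<in>{1..L}. \<alpha> i l * E i l)"

definition dual_feasible :: "(nat \<Rightarrow> nat) \<Rightarrow> (nat \<Rightarrow> real) \<Rightarrow> nat \<Rightarrow> nat
     \<Rightarrow> (nat \<Rightarrow> nat \<Rightarrow> real) \<Rightarrow> bool" where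
  "dual_feasible Y Cf N L \<alpha> \<longleftrightarrow>
     (\<forall>i\<in>{1..N}. (\<Sum>l\<in>{1..L}. \<alpha> i l) = 0 \<and>
        (\<forall>l\<in>{1..L}. (l = Y i \<longrightarrow> \<alpha> i l \<le> Cf i) \<and> (l \<noteq> Y i \<longrightarrow> \<alpha> i l \<le> 0)))"

definition grad :: "('a \<Rightarrow> 'a \<Rightarrow> real) \<Rightarrow> (nat \<Rightarrow> 'a) \<Rightarrow> (nat \<Rightarrow> nat \<Rightarrow> real)
     \<Rightarrow> nat \<Rightarrow> (nat \<Rightarrow> nat \<Rightarrow> real) \<Rightarrow> nat \<Rightarrow> nat \<Rightarrow> real" where
  "grad K X E N \<alpha> i k = (\<Sum>j\<in>{1..N}. \<alpha> j k * K (X i) (X j)) + E i k"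

end

theory Submission
  imports Defs
begin

definition Bf :: "('a \<Rightarrow> 'a \<Rightarrow> real) \<Rightarrow> (nat \<Rightarrow> 'a) \<Rightarrow> nat \<Rightarrow> nat \<Rightarrow> (nat \<Rightarrow> nat \<Rightarrow> real) \<Rightarrow> (nat \<Rightarrow> nat \<Rightarrow> real) \<Rightarrow> real" where
  "Bf K X N L u v = (\<Sum>j\<in>{1..N}. \<Sum>j'\<in>{1..N}. \<Sum>l\<in>{1..L}. u j l * v j' l * K (X j) (X j'))"

lemma Bf_expand:
  "Bf K X N L (\<lambda>j l. a j l + t * g j l) (\<lambda>j l. a j l + t * g j l) =
   Bf K X N L a a + t * Bf K X N L g a + t * Bf K X N L a g + t^2 * Bf K X N L g g"
proof -
  have "\<And>j j' l. (a j l + t * g j l) * (a j' l + t * g j' l) * K (X j) (X j') =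
     a j l * a j' l * K (X j) (X j') + t * (g j l * a j' l * K (X j) (X j')) + t * (a j l * g j' l * K (X j) (X j'))
     + t^2 * (g j l * g j' l * K (X j) (X j'))"
    by (simp add: algebra_simps power2_eq_square)
  then show ?thesis unfolding Bf_def by (simp add: sum.distrib sum_distrib_left)
qed

lemma Bf_sym: assumes "\<forall>x y. K x y = K y x" shows "Bf K X N L u v = Bf K X N L v u"
proof -
  have "Bf K X N L v u = (\<Sum>j'\<in>{1..N}. \<Sum>j\<in>{1..N}. \<Sum>l\<in>{1..L}. v j l * u j' l * K (X j) (X j'))"
    unfolding Bf_def by (rule sum.swap)
  also have "\<dots> = Bf K X N L u v"
    unfolding Bf_def using assms by (intro sum.cong refl) (simp add: mult.commute mult.left_commute)
  finally show ?thesis by simp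
qed

lemma Bf_delta: assumes "i \<in> {1..N}"
  shows "Bf K X N L (\<lambda>j l. if j = i then g l else 0) v = (\<Sum>l\<in>{1..L}. g l * (\<Sum>j\<in>{1..N}. v j l * K (X i) (X j)))"
proof -
  have "Bf K X N L (\<lambda>j l. if j = i then g l else 0) v =
     (\<Sum>j\<in>{1..N}. if j = i then (\<Sum>j'\<in>{1..N}. \<Sum>l\<in>{1..L}. g l * v j' l * K (X i) (X j')) else 0)"
    unfolding Bf_def by (intro sum.cong) auto
  also have "\<dots> = (\<Sum>j'\<in>{1..N}. \<Sum>l\<in>{1..L}. g l * v j' l * K (X i) (X j'))"
    using assms by (simp add: sum.delta)
  also have "\<dots> = (\<Sum>l\<in>{1..L}. g l * (\<Sum>j\<in>{1..N}. v j l * K (X i) (X j)))"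
    by (subst sum.swap) (simp add: sum_distrib_left mult.assoc)
  finally show ?thesis .
qed

lemma obj_perturb:
  assumes sym: "\<forall>x y. K x y = K y x" and i: "i \<in> {1..N}"
  shows "dual_obj K X E N L (\<lambda>j l. \<alpha> j l + t * (if j = i then \<gamma> l else 0)) =
    dual_obj K X E N L \<alpha> - t * (\<Sum>l\<in>{1..L}. \<gamma> l * grad K X E N \<alpha> i l)
      - t^2 / 2 * (\<Sum>l\<in>{1..L}. \<gamma> l * (\<gamma> l * K (X i) (X i)))"
proof -
  let ?G = "\<lambda>j l. if j = i then \<gamma> l else 0"
  have q1: "(\<Sum>j\<in>{1..N}. \<Sum>j'\<in>{1..N}. \<Sum>l\<in>{1..L}. (\<alpha> j l + t * ?G j l) * (\<alpha> j' l + t * ?G j' l) * K (X j) (X j'))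
     = Bf K X N L \<alpha> \<alpha> + 2 * t * (\<Sum>l\<in>{1..L}. \<gamma> l * (\<Sum>j\<in>{1..N}. \<alpha> j l * K (X i) (X j)))
       + t^2 * (\<Sum>l\<in>{1..L}. \<gamma> l * (\<gamma> l * K (X i) (X i)))"
  proof -
    have "Bf K X N L ?G ?G = (\<Sum>l\<in>{1..L}. \<gamma> l * (\<Sum>j\<in>{1..N}. ?G j l * K (X i) (X j)))"
      using Bf_delta[OF i] by blast
    also have "\<dots> = (\<Sum>l\<in>{1..L}. \<gamma> l * (\<gamma> l * K (X i) (X i)))"
    proof -
      have "\<And>l. (\<Sum>j\<in>{1..N}. ?G j l * K (X i) (X j)) = (\<Sum>j\<in>{1..N}. if j = i then \<gamma> l * K (X i) (X i) else 0)"
        by (intro sum.cong) auto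
      then show ?thesis using i by (simp add: sum.delta)
    qed
    finally have gg: "Bf K X N L ?G ?G = \<dots>" .
    have "Bf K X N L \<alpha> ?G = Bf K X N L ?G \<alpha>" using Bf_sym[OF sym] by blast
    then show ?thesis using Bf_expand[of K X N L \<alpha> t ?G] Bf_delta[OF i, of K X L \<gamma> \<alpha>] gg
      unfolding Bf_def by simp
  qed
  have q2: "(\<Sum>j\<in>{1..N}. \<Sum>l\<in>{1..L}. (\<alpha> j l + t * ?G j l) * E j l) =
     (\<Sum>j\<in>{1..N}. \<Sum>l\<in>{1..L}. \<alpha> j l * E j l) + t * (\<Sum>l\<in>{1..L}. \<gamma> l * E i l)"
  proof -
    have pw: "\<And>j. (\<Sum>l\<in>{1..L}. (\<alpha> j l + t * ?G j l) * E j l) =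
      (\<Sum>l\<in>{1..L}. \<alpha> j l * E j l) + (if j = i then t * (\<Sum>l\<in>{1..L}. \<gamma> l * E i l) else 0)"
      by (auto simp: algebra_simps sum.distrib sum_distrib_left)
    have "(\<Sum>j\<in>{1..N}. \<Sum>l\<in>{1..L}. (\<alpha> j l + t * ?G j l) * E j l) =
      (\<Sum>j\<in>{1..N}. \<Sum>l\<in>{1..L}. \<alpha> j l * E j l) + (\<Sum>j\<in>{1..N}. if j = i then t * (\<Sum>l\<in>{1..L}. \<gamma> l * E i l) else 0)"
      unfolding pw by (rule sum.distrib)
    then show ?thesis using i by (simp add: sum.delta)
  qed
  have q3: "(\<Sum>l\<in>{1..L}. \<gamma> l * grad K X E N \<alpha> i l) =
     (\<Sum>l\<in>{1..L}. \<gamma> l * (\<Sum>j\<in>{1..N}. \<alpha> j l * K (X i) (X j))) + (\<Sum>l\<in>{1..L}. \<gamma> l * E i l)"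
    unfolding grad_def by (simp add: algebra_simps sum.distrib)
  show ?thesis unfolding dual_obj_def q1 q2 q3 by (simp add: Bf_def algebra_simps)
qed


lemma limit_zero:
  fixes S c :: real
  assumes ev: "\<forall>\<^sub>F t in at 0. - t * S - t^2 / 2 * c \<le> 0"
  shows "S = 0"
proof -
  have t: "((\<lambda>t::real. - S - t * c / 2) \<longlongrightarrow> - S) (at 0 within A)" for A
    by (auto intro!: tendsto_eq_intros)
  have r: "\<forall>\<^sub>F t in at_right 0. - S - t * c / 2 \<le> 0"
  proof -
    have "\<forall>\<^sub>F t in at_right 0. - t * S - t^2 / 2 * c \<le> 0 \<and> t > (0::real)"
      using ev eventually_at_right_less[of 0] by (auto simp: at_eq_sup_left_right eventually_sup elim: eventually_conj)
    then show ?thesis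
    proof (rule eventually_mono)
      fix t :: real assume h: "- t * S - t^2 / 2 * c \<le> 0 \<and> t > 0"
      then have "t * (- S - t * c / 2) \<le> 0" by (simp add: algebra_simps power2_eq_square)
      then show "- S - t * c / 2 \<le> 0" using h by (simp add: mult_le_0_iff)
    qed
  qed
  have l: "\<forall>\<^sub>F t in at_left 0. - S - t * c / 2 \<ge> 0"
  proof -
    have "\<forall>\<^sub>F t in at_left 0. - t * S - t^2 / 2 * c \<le> 0 \<and> t < (0::real)"
      using ev eventually_at_filter[of "\<lambda>t. t < (0::real)" 0 "{..<0}"] by (auto simp: at_eq_sup_left_right eventually_sup elim: eventually_conj)
    then show ?thesis
    proof (rule eventually_mono)
      fix t :: real assume h: "- t * S - t^2 / 2 * c \<le> 0 \<and> t < 0"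
      then have "t * (- S - t * c / 2) \<le> 0" by (simp add: algebra_simps power2_eq_square)
      then show "- S - t * c / 2 \<ge> 0" using h by (simp add: mult_le_0_iff)
    qed
  qed
  have "- S \<le> 0" by (rule tendsto_upperbound[OF t r]) simp
  moreover have "- S \<ge> 0" by (rule tendsto_lowerbound[OF t l]) simp
  ultimately show ?thesis by simp
qed

lemma feas_perturb:
  assumes feas: "dual_feasible Y Cf N L \<alpha>" and i: "i \<in> {1..N}" and lt: "\<alpha> i (Y i) < Cf i"
    and g0: "(\<Sum>k\<in>{1..L}. \<gamma> k) = 0" and gs: "\<forall>k\<in>{1..L}. \<alpha> i k = 0 \<longrightarrow> \<gamma> k = 0"
  shows "\<forall>\<^sub>F t in at (0::real). dual_feasible Y Cf N L (\<lambda>j l. \<alpha> j l + t * (if j = i then \<gamma> l else 0))"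
proof -
  have ev: "\<forall>\<^sub>F t in at (0::real). (l = Y i \<longrightarrow> \<alpha> i l + t * \<gamma> l \<le> Cf i) \<and> (l \<noteq> Y i \<longrightarrow> \<alpha> i l + t * \<gamma> l \<le> 0)"
    if l: "l \<in> {1..L}" for l
  proof -
    have tt: "((\<lambda>t::real. \<alpha> i l + t * \<gamma> l) \<longlongrightarrow> \<alpha> i l) (at 0)"
      by (auto intro!: tendsto_eq_intros)
    show ?thesis
    proof (cases "l = Y i")
      case True
      have "\<forall>\<^sub>F t in at (0::real). \<alpha> i l + t * \<gamma> l < Cf i"
        using order_tendstoD(2)[OF tt] lt True by simp
      then show ?thesis by (rule eventually_mono) (use True in auto)
    next
      case False
      have al: "\<alpha> i l \<le> 0" using feas i l False unfolding dual_feasible_def by auto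
      show ?thesis
      proof (cases "\<alpha> i l = 0")
        case True
        then have "\<gamma> l = 0" using gs l by auto
        then show ?thesis using False True by simp
      next
        case False2: False
        have "\<forall>\<^sub>F t in at (0::real). \<alpha> i l + t * \<gamma> l < 0"
          using order_tendstoD(2)[OF tt] al False2 by simp
        then show ?thesis by (rule eventually_mono) (use False in auto)
      qed
    qed
  qed
  have "\<forall>\<^sub>F t in at (0::real). \<forall>l\<in>{1..L}. (l = Y i \<longrightarrow> \<alpha> i l + t * \<gamma> l \<le> Cf i) \<and> (l \<noteq> Y i \<longrightarrow> \<alpha> i l + t * \<gamma> l \<le> 0)"
    using ev by (intro eventually_ball_finite) auto
  then show ?thesis
  proof (rule eventually_mono)
    fix t :: real
    assume h: "\<forall>l\<in>{1..L}. (l = Y i \<longrightarrow> \<alpha> i l + t * \<gamma> l \<le> Cf i) \<and> (l \<noteq> Y i \<longrightarrow> \<alpha> i l + t * \<gamma> l \<le> 0)"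
    show "dual_feasible Y Cf N L (\<lambda>j l. \<alpha> j l + t * (if j = i then \<gamma> l else 0))"
      unfolding dual_feasible_def
    proof
      fix j assume j: "j \<in> {1..N}"
      show "(\<Sum>l\<in>{1..L}. \<alpha> j l + t * (if j = i then \<gamma> l else 0)) = 0 \<and>
        (\<forall>l\<in>{1..L}. (l = Y j \<longrightarrow> \<alpha> j l + t * (if j = i then \<gamma> l else 0) \<le> Cf j) \<and>
            (l \<noteq> Y j \<longrightarrow> \<alpha> j l + t * (if j = i then \<gamma> l else 0) \<le> 0))"
      proof (cases "j = i")
        case True
        have "(\<Sum>l\<in>{1..L}. \<alpha> j l + t * \<gamma> l) = 0"
          using feas j g0 unfolding dual_feasible_def by (simp add: sum.distrib sum_distrib_left[symmetric])
        then show ?thesis using True h by simp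
      next
        case False
        then show ?thesis using feas j unfolding dual_feasible_def by simp
      qed
    qed
  qed
qed

theorem lemmaA1:
  fixes K :: "'a \<Rightarrow> 'a \<Rightarrow> real"
    and xs xu :: "nat \<Rightarrow> 'a" and ys :: "nat \<Rightarrow> nat"
    and n m L N :: nat and C Cs \<Delta> :: real
    and \<alpha> :: "nat \<Rightarrow> nat \<Rightarrow> real" and i :: nat
  defines "X \<equiv> aug_x n L xs xu"
    and "Y \<equiv> aug_y n L ys"
    and "Cf \<equiv> aug_C n C Cs"
    and "E \<equiv> aug_e n L \<Delta> ys"
  assumes K: "psd_kernel K"
    and N: "N = n + m * L"
    and ys: "\<forall>i\<in>{1..n}. ys i \<in> {1..L}"
    and C: "C > 0" and Cs: "Cs > 0" and \<Delta>: "\<Delta> \<ge> 0"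
    and feas: "dual_feasible Y Cf N L \<alpha>"
    and opt: "\<forall>\<beta>. dual_feasible Y Cf N L \<beta> \<longrightarrow> dual_obj K X E N L \<beta> \<le> dual_obj K X E N L \<alpha>"
    and SV1: "i \<in> {1..N}" "0 < \<alpha> i (Y i)" "\<alpha> i (Y i) < Cf i"
  shows "(\<Sum>k\<in>{1..L}. \<alpha> i k * grad K X E N \<alpha> i k) = 0 \<and>
    (\<forall>k\<in>{1..L}. k \<noteq> Y i \<and> \<alpha> i k < 0 \<longrightarrow>
           grad K X E N \<alpha> i k = grad K X E N \<alpha> i (Y i)) \<and>
    (\<forall>\<gamma>::nat \<Rightarrow> real. (\<Sum>k\<in>{1..L}. \<gamma> k) = 0 \<and> (\<forall>k\<in>{1..L}. \<alpha> i k = 0 \<longrightarrow> \<gamma> k = 0)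
           \<longrightarrow> (\<Sum>k\<in>{1..L}. \<gamma> k * grad K X E N \<alpha> i k) = 0)"
proof -
  have sym: "\<forall>x y. K x y = K y x" using K unfolding psd_kernel_def by blast
  have iii: "(\<Sum>k\<in>{1..L}. \<gamma> k * grad K X E N \<alpha> i k) = 0"
    if g0: "(\<Sum>k\<in>{1..L}. \<gamma> k) = 0" and gs: "\<forall>k\<in>{1..L}. \<alpha> i k = 0 \<longrightarrow> \<gamma> k = 0" for \<gamma>
  proof -
    have "\<forall>\<^sub>F t in at (0::real). dual_feasible Y Cf N L (\<lambda>j l. \<alpha> j l + t * (if j = i then \<gamma> l else 0))"
      by (rule feas_perturb[OF feas SV1(1) SV1(3) g0 gs])
    then have "\<forall>\<^sub>F t in at (0::real). - t * (\<Sum>l\<in>{1..L}. \<gamma> l * grad K X E N \<alpha> i l)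
      - t^2 / 2 * (\<Sum>l\<in>{1..L}. \<gamma> l * (\<gamma> l * K (X i) (X i))) \<le> 0"
    proof (rule eventually_mono)
      fix t :: real
      assume "dual_feasible Y Cf N L (\<lambda>j l. \<alpha> j l + t * (if j = i then \<gamma> l else 0))"
      then have "dual_obj K X E N L (\<lambda>j l. \<alpha> j l + t * (if j = i then \<gamma> l else 0)) \<le> dual_obj K X E N L \<alpha>"
        using opt by blast
      then show "- t * (\<Sum>l\<in>{1..L}. \<gamma> l * grad K X E N \<alpha> i l)
      - t^2 / 2 * (\<Sum>l\<in>{1..L}. \<gamma> l * (\<gamma> l * K (X i) (X i))) \<le> 0"
        unfolding obj_perturb[OF sym SV1(1)] by simp
    qed
    then show ?thesis by (rule limit_zero)
  qed
  have Yi: "Y i \<in> {1..L}"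
  proof (cases "i \<le> n")
    case True
    then show ?thesis using ys SV1(1) unfolding Y_def aug_y_def by auto
  next
    case False
    then have "L > 0" using SV1(1) N by (cases "L = 0") auto
    then show ?thesis using False unfolding Y_def aug_y_def by (auto simp: Suc_le_eq)
  qed
  have i1: "(\<Sum>k\<in>{1..L}. \<alpha> i k * grad K X E N \<alpha> i k) = 0"
    using feas SV1(1) unfolding dual_feasible_def by (intro iii) auto
  have i2: "grad K X E N \<alpha> i k = grad K X E N \<alpha> i (Y i)"
    if k: "k \<in> {1..L}" "k \<noteq> Y i" "\<alpha> i k < 0" for k
  proof -
    let ?g = "\<lambda>l. (if l = k then 1 else 0) - (if l = Y i then 1 else (0::real))"
    have "(\<Sum>l\<in>{1..L}. ?g l) = 0" using k Yi by (simp add: sum.distrib sum_subtractf)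
    moreover have "\<forall>l\<in>{1..L}. \<alpha> i l = 0 \<longrightarrow> ?g l = 0" using k SV1(2) by auto
    ultimately have "(\<Sum>l\<in>{1..L}. ?g l * grad K X E N \<alpha> i l) = 0" by (rule iii)
    moreover have "(\<Sum>l\<in>{1..L}. ?g l * grad K X E N \<alpha> i l) = grad K X E N \<alpha> i k - grad K X E N \<alpha> i (Y i)"
    proof -
      have "(\<Sum>l\<in>{1..L}. ?g l * grad K X E N \<alpha> i l) =
        (\<Sum>l\<in>{1..L}. (if l = k then grad K X E N \<alpha> i l else 0) - (if l = Y i then grad K X E N \<alpha> i l else 0))"
        by (intro sum.cong) auto
      also have "\<dots> = grad K X E N \<alpha> i k - grad K X E N \<alpha> i (Y i)"
        using k Yi by (simp only: sum_subtractf sum.delta finite_atLeastAtMost if_True)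
      finally show ?thesis .
    qed
    ultimately show ?thesis by simp
  qed
  show ?thesis using i1 i2 iii by blast
qed

end
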